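(* Let $(X,d)$ be a totally bounded metric space, $\emptyset\ne F\subseteq X$ with a representation $(\tilde F_k)$, and let $G,H:\mathbb{R}_+\to\mathbb{R}_+$ satisfy properties (G) and (H). Let $(x_n)$ be a sequence in $X$ that is uniformly $(G,H)$-Fej\'er monotone w.r.t. $F$ and has approximate $F$-points. Then $(x_n)$ is Cauchy.
   Context: A representation of $F$: sets $\tilde F_k\subseteq X$ with $F=\bigcap_k\tilde F_k$; $AF_k:=\bigcap_{l\le k}\tilde F_l$. Property (G): $a_n\to0$ implies $G(a_n)\to0$ for all sequences $(a_n)$ in $\mathbb{R}_+$; property (H): $H(a_n)\to0$ implies $a_n\to0$. $(x_n)$ is uniformly $(G,H)$-Fej\'er monotone w.r.t. $F$ if for all $r,n,m\in\mathbb{N}$ there exists $k\in\mathbb{N}$ such that for all $p\in AF_k$ and all $l\le m$, $H(d(x_{n+l},p))<G(d(x_n,p))+\frac1{r+1}$. $(x_n)$ has approximate $F$-points if for every $k\in\mathbb{N}$ there is $N$ with $x_N\in AF_k$. *)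

theory Defs
  imports "HOL-Analysis.Analysis"
begin

definition prop_G :: "(real \<Rightarrow> real) \<Rightarrow> bool" where
  "prop_G G \<longleftrightarrow> (\<forall>a::nat \<Rightarrow> real. (\<forall>n. a n \<ge> 0) \<longrightarrow> a \<longlonglongrightarrow> 0 \<longrightarrow> (\<lambda>n. G (a n)) \<longlonglongrightarrow> 0)"

definition prop_H :: "(real \<Rightarrow> real) \<Rightarrow> bool" where
  "prop_H H \<longleftrightarrow> (\<forall>a::nat \<Rightarrow> real. (\<forall>n. a n \<ge> 0) \<longrightarrow> (\<lambda>n. H (a n)) \<longlonglongrightarrow> 0 \<longrightarrow> a \<longlonglongrightarrow> 0)"

definition AF :: "(nat \<Rightarrow> 'a set) \<Rightarrow> nat \<Rightarrow> 'a set" where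
  "AF Ft k = (\<Inter>l\<in>{..k}. Ft l)"

definition uniformly_GH_fejer ::
  "(real \<Rightarrow> real) \<Rightarrow> (real \<Rightarrow> real) \<Rightarrow> (nat \<Rightarrow> 'a::metric_space set) \<Rightarrow> (nat \<Rightarrow> 'a) \<Rightarrow> bool" where
  "uniformly_GH_fejer G H Ft x \<longleftrightarrow>
     (\<forall>r n m::nat. \<exists>k::nat. \<forall>p\<in>AF Ft k. \<forall>l\<le>m.
        H (dist (x (n + l)) p) < G (dist (x n) p) + 1 / (real r + 1))"

definition has_approx_F_points :: "(nat \<Rightarrow> 'a set) \<Rightarrow> (nat \<Rightarrow> 'a) \<Rightarrow> bool" where
  "has_approx_F_points Ft x \<longleftrightarrow> (\<forall>k. \<exists>N. x N \<in> AF Ft k)"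

end

theory Submission
  imports Defs
begin

lemma H_eps:
  assumes "prop_H H" "\<And>t. t \<ge> 0 \<Longrightarrow> H t \<ge> 0" "e > 0"
  shows "\<exists>d>0. \<forall>t\<ge>0. H t < d \<longrightarrow> t < e"
proof (rule ccontr)
  assume A: "\<not> ?thesis"
  have "\<forall>n::nat. \<exists>t\<ge>0. H t < 1/(real n+1) \<and> t \<ge> e"
  proof
    fix n :: nat
    have "1/(real n+1) > 0" by simp
    thus "\<exists>t\<ge>0. H t < 1/(real n+1) \<and> t \<ge> e" using A by (meson not_le)
  qed
  then obtain a where a: "\<And>n. a n \<ge> 0" "\<And>n. H (a n) < 1/(real n+1)" "\<And>n. a n \<ge> e"
    by metis
  have "(\<lambda>n. H (a n)) \<longlonglongrightarrow> 0"
  proof (rule real_tendsto_sandwich[of "\<lambda>n. 0" _ _ "\<lambda>n. 1/(real n+1)"])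
    show "\<forall>\<^sub>F n in sequentially. 0 \<le> H (a n)" using a(1) assms(2) by auto
    show "\<forall>\<^sub>F n in sequentially. H (a n) \<le> 1/(real n+1)" using a(2) by (simp add: less_imp_le)
    show "(\<lambda>n. 0::real) \<longlonglongrightarrow> 0" by simp
    show "(\<lambda>n. 1/(real n+1)) \<longlonglongrightarrow> 0" using LIMSEQ_inverse_real_of_nat
      by (simp add: inverse_eq_divide add.commute)
  qed
  hence "a \<longlonglongrightarrow> 0" using assms(1) a(1) unfolding prop_H_def by blast
  then obtain N where "\<forall>n\<ge>N. norm (a n - 0) < e" using assms(3) LIMSEQ_D by blast
  with a(3)[of N] a(1)[of N] show False by auto
qed

lemma G_eps:
  assumes "prop_G G" "d > 0"
  shows "\<exists>h>0. \<forall>t\<ge>0. t < h \<longrightarrow> G t < d"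
proof (rule ccontr)
  assume A: "\<not> ?thesis"
  have "\<forall>n::nat. \<exists>t\<ge>0. t < 1/(real n+1) \<and> G t \<ge> d"
  proof
    fix n :: nat
    have "1/(real n+1) > 0" by simp
    thus "\<exists>t\<ge>0. t < 1/(real n+1) \<and> G t \<ge> d" using A by (meson not_le)
  qed
  then obtain a where a: "\<And>n. a n \<ge> 0" "\<And>n. a n < 1/(real n+1)" "\<And>n. G (a n) \<ge> d"
    by metis
  have "a \<longlonglongrightarrow> 0"
  proof (rule real_tendsto_sandwich[of "\<lambda>n. 0" _ _ "\<lambda>n. 1/(real n+1)"])
    show "\<forall>\<^sub>F n in sequentially. 0 \<le> a n" using a(1) by auto
    show "\<forall>\<^sub>F n in sequentially. a n \<le> 1/(real n+1)" using a(2) by (simp add: less_imp_le)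
    show "(\<lambda>n. 0::real) \<longlonglongrightarrow> 0" by simp
    show "(\<lambda>n. 1/(real n+1)) \<longlonglongrightarrow> 0" using LIMSEQ_inverse_real_of_nat
      by (simp add: inverse_eq_divide add.commute)
  qed
  hence "(\<lambda>n. G (a n)) \<longlonglongrightarrow> 0" using assms(1) a(1) unfolding prop_G_def by blast
  then obtain N where "\<forall>n\<ge>N. norm (G (a n) - 0) < d" using assms(2) LIMSEQ_D by blast
  with a(3)[of N] show False by auto
qed

fun SS :: "(nat \<Rightarrow> nat) \<Rightarrow> (nat \<Rightarrow> nat) \<Rightarrow> nat \<Rightarrow> nat \<times> nat" where
  "SS Nf kf 0 = (Nf 0, kf (Nf 0))"
| "SS Nf kf (Suc j) = (Nf (snd (SS Nf kf j)), max (snd (SS Nf kf j)) (kf (Nf (snd (SS Nf kf j)))))"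

lemma SS_mono: "i \<le> j \<Longrightarrow> snd (SS Nf kf i) \<le> snd (SS Nf kf j)"
proof (induction j)
  case 0 then show ?case by simp
next
  case (Suc j) then show ?case by (cases "i = Suc j") (auto simp: Let_def le_Suc_eq)
qed

lemma SS_k: "kf (fst (SS Nf kf i)) \<le> snd (SS Nf kf i)"
  by (cases i) auto

lemma AF_mono: "k \<le> k' \<Longrightarrow> AF Ft k' \<subseteq> AF Ft k"
  unfolding AF_def by auto

theorem corollary5p2:
  fixes X :: "'a::metric_space set" and F :: "'a set" and Ft :: "nat \<Rightarrow> 'a set"
    and G H :: "real \<Rightarrow> real" and x :: "nat \<Rightarrow> 'a"
  assumes "totally_bounded X"
    and "F \<noteq> {}" and "F \<subseteq> X"
    and "\<And>k. Ft k \<subseteq> X" and "F = (\<Inter>k. Ft k)"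
    and "\<And>t. t \<ge> 0 \<Longrightarrow> G t \<ge> 0" and "\<And>t. t \<ge> 0 \<Longrightarrow> H t \<ge> 0"
    and "prop_G G" and "prop_H H"
    and "\<And>n. x n \<in> X"
    and "uniformly_GH_fejer G H Ft x"
    and "has_approx_F_points Ft x"
  shows "Cauchy x"
proof (rule ccontr)
  assume nc: "\<not> Cauchy x"
  then obtain e where e: "e > 0" "\<forall>M. \<exists>m\<ge>M. \<exists>n\<ge>M. \<not> dist (x m) (x n) < e"
    unfolding Cauchy_def by blast
  define \<epsilon> where "\<epsilon> = e/2"
  have \<epsilon>: "\<epsilon> > 0" using e by (simp add: \<epsilon>_def)
  have "\<forall>n. \<exists>l. dist (x n) (x (n + l)) \<ge> \<epsilon>"
  proof
    fix n
    obtain m k where mk: "m \<ge> n" "k \<ge> n" "dist (x m) (x k) \<ge> e" using e(2) by force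
    show "\<exists>l. dist (x n) (x (n + l)) \<ge> \<epsilon>"
    proof (rule ccontr)
      assume "\<not> ?thesis"
      hence A: "\<And>l. dist (x n) (x (n + l)) < \<epsilon>" by (simp add: not_le)
      have "dist (x n) (x m) < \<epsilon>" using A[of "m - n"] mk(1) by simp
      moreover have "dist (x n) (x k) < \<epsilon>" using A[of "k - n"] mk(2) by simp
      ultimately have "dist (x n) (x m) < \<epsilon>" "dist (x n) (x k) < \<epsilon>" by auto
      hence "dist (x m) (x k) < e" using dist_triangle2[of "x m" "x k" "x n"]
        by (simp add: \<epsilon>_def dist_commute)
      with mk show False by simp
    qed
  qed
  then obtain g where g: "\<And>n. dist (x n) (x (n + g n)) \<ge> \<epsilon>" by metis
  obtain \<delta> where \<delta>: "\<delta> > 0" "\<And>t. t \<ge> 0 \<Longrightarrow> H t < \<delta> \<Longrightarrow> t < \<epsilon>/2"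
    using H_eps[OF assms(9) assms(7), of "\<epsilon>/2"] \<epsilon> by auto
  obtain \<eta> where \<eta>: "\<eta> > 0" "\<And>t. t \<ge> 0 \<Longrightarrow> t < \<eta> \<Longrightarrow> G t < \<delta>/2"
    using G_eps[OF assms(8), of "\<delta>/2"] \<delta> by auto
  obtain r :: nat where r: "1/(real r+1) < \<delta>/2"
  proof -
    obtain r :: nat where "2/\<delta> < real r" using reals_Archimedean2 by blast
    hence "1/(real r+1) < \<delta>/2" using \<delta>(1)
      by (simp add: field_simps)
    thus ?thesis using that by blast
  qed
  have "\<forall>n. \<exists>k. \<forall>p\<in>AF Ft k. \<forall>l\<le>g n.
        H (dist (x (n + l)) p) < G (dist (x n) p) + 1 / (real r + 1)"
    using assms(11) unfolding uniformly_GH_fejer_def by blast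
  then obtain kf where kf: "\<And>n p l. p \<in> AF Ft (kf n) \<Longrightarrow> l \<le> g n \<Longrightarrow>
        H (dist (x (n + l)) p) < G (dist (x n) p) + 1 / (real r + 1)"
    by metis
  obtain Nf where Nf: "\<And>k. x (Nf k) \<in> AF Ft k"
    using assms(12) unfolding has_approx_F_points_def by metis
  define N where "N = (\<lambda>j. fst (SS Nf kf j))"
  define K where "K = (\<lambda>j. snd (SS Nf kf j))"
  have key: "x (N j) \<in> AF Ft (kf (N i))" if "i < j" for i j
  proof -
    define j' where "j' = j - 1"
    have j': "j = Suc j'" "i \<le> j'" using \<open>i < j\<close> unfolding j'_def by simp_all
    have "kf (N i) \<le> K j'" using SS_k[of kf Nf i] SS_mono[OF j'(2), of Nf kf]
      unfolding N_def K_def by linarith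
    moreover have "N j = Nf (K j')" using j'(1) by (simp add: N_def K_def)
    ultimately show ?thesis using Nf[of "K j'"] AF_mono[of "kf (N i)" "K j'" Ft] by auto
  qed
  obtain C where C: "finite C" "X \<subseteq> (\<Union>c\<in>C. {y. dist c y < \<eta>/2})"
  proof -
    have "\<eta>/2 > 0" using \<eta>(1) by simp
    then obtain C where "finite C" "X \<subseteq> (\<Union>c\<in>C. {y. dist c y < \<eta>/2})"
      using assms(1) unfolding totally_bounded_metric by meson
    thus ?thesis using that by simp
  qed
  have "\<forall>j. \<exists>c\<in>C. dist c (x (N j)) < \<eta>/2"
  proof
    fix j have "x (N j) \<in> X" by (rule assms(10))
    then show "\<exists>c\<in>C. dist c (x (N j)) < \<eta>/2" using C(2) by auto
  qed
  then obtain cf where cf: "\<And>j. cf j \<in> C" "\<And>j. dist (cf j) (x (N j)) < \<eta>/2" by metis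
  have "\<not> inj cf"
  proof
    assume "inj cf"
    hence "infinite (range cf)" using range_inj_infinite by blast
    moreover have "range cf \<subseteq> C" using cf(1) by blast
    ultimately show False using C(1) finite_subset by blast
  qed
  then obtain i j where ij: "i \<noteq> j" "cf i = cf j" unfolding inj_def by blast
  have "\<exists>i j. i < j \<and> dist (x (N i)) (x (N j)) < \<eta>"
  proof -
    have "dist (x (N i)) (x (N j)) < \<eta>"
      using cf(2)[of i] cf(2)[of j] ij(2) dist_triangle2[of "x (N i)" "x (N j)" "cf i"]
      by (simp add: dist_commute)
    show ?thesis
    proof (cases "i < j")
      case True thus ?thesis using \<open>dist (x (N i)) (x (N j)) < \<eta>\<close> by blast
    next
      case False hence "j < i" using ij(1) by simp
      thus ?thesis using \<open>dist (x (N i)) (x (N j)) < \<eta>\<close> by (metis dist_commute)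
    qed
  qed
  then obtain i j where ij: "i < j" "dist (x (N i)) (x (N j)) < \<eta>" by blast
  define p where "p = x (N j)"
  define n where "n = N i"
  have pA: "p \<in> AF Ft (kf n)" using key[OF ij(1)] by (simp add: p_def n_def)
  have Gl: "G (dist (x n) p) < \<delta>/2" using \<eta>(2) ij(2) by (simp add: p_def n_def)
  have close: "dist (x (n + l)) p < \<epsilon>/2" if "l \<le> g n" for l
  proof -
    have "H (dist (x (n + l)) p) < \<delta>" using kf[OF pA that] Gl r by linarith
    thus ?thesis using \<delta>(2) by simp
  qed
  have "dist (x n) (x (n + g n)) < \<epsilon>"
    using close[of 0] close[of "g n"] dist_triangle2[of "x n" "x (n + g n)" p] by simp
  with g[of n] show False by simp
qed

end
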